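(* For every integer $n \ge 2$, let $F_n(x) = \sum_{k=1}^{n} x^{\log k}$ for $0 < x \le 1$. Then $$\frac{\pi^2}{6} \sum_{\substack{p \le n\\ p \text{ prime}}} \frac{1}{\log p} \;\ge\; \int_0^1 \frac{\log F_n(x)}{x}\, dx.$$
   Context: $\log$ denotes the natural logarithm; the sum runs over all primes $p \le n$. *)

theory Defs
  imports "HOL-Analysis.Analysis" "HOL-Computational_Algebra.Primes"
begin

definition F :: "nat \<Rightarrow> real \<Rightarrow> real" where
  "F n x = (\<Sum>k = 1..n. x powr ln (real k))"

end

theory Submission
  imports Defs
begin


lemma ln_mult_sum:
  fixes n k :: nat
  assumes k: "1 \<le> k" "k \<le> n"
  shows "ln (real k) = (\<Sum>p\<in>{p. prime p \<and> p \<le> n}. real (multiplicity p k) * ln (real p))"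
proof -
  have sub: "prime_factors k \<subseteq> {p. prime p \<and> p \<le> n}"
    using k by (auto dest: in_prime_factors_imp_prime simp: in_prime_factors_iff dvd_imp_le intro: order_trans[OF dvd_imp_le])
  have "(\<Prod>p \<in> prime_factors k. p ^ multiplicity p k) = k"
    using prod_prime_factors[of k] k by simp
  hence "(\<Prod>p \<in> {p. prime p \<and> p \<le> n}. p ^ multiplicity p k) = k"
  proof -
    have "(\<Prod>p \<in> prime_factors k. p ^ multiplicity p k) = (\<Prod>p \<in> {p. prime p \<and> p \<le> n}. p ^ multiplicity p k)"
    proof (rule prod.mono_neutral_left[OF _ sub])
      show "finite {p. prime p \<and> p \<le> n}" by simp
      show "\<forall>i\<in>{p. prime p \<and> p \<le> n} - prime_factors k. i ^ multiplicity i k = 1"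
      proof
        fix i assume "i \<in> {p. prime p \<and> p \<le> n} - prime_factors k"
        hence "\<not> i dvd k" using k by (auto simp: in_prime_factors_iff)
        thus "i ^ multiplicity i k = 1" by (simp add: not_dvd_imp_multiplicity_0)
      qed
    qed
    thus ?thesis using \<open>(\<Prod>p \<in> prime_factors k. p ^ multiplicity p k) = k\<close> by simp
  qed
  hence "real k = real (\<Prod>p \<in> {p. prime p \<and> p \<le> n}. p ^ multiplicity p k)"
    by simp
  hence "real k = (\<Prod>p \<in> {p. prime p \<and> p \<le> n}. real p ^ multiplicity p k)"
    by (simp only: of_nat_prod of_nat_power)
  hence "ln (real k) = (\<Sum>p \<in> {p. prime p \<and> p \<le> n}. ln (real p ^ multiplicity p k))"
    by (simp only:) (rule ln_prod, auto simp: prime_gt_0_nat)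
  thus ?thesis by (simp add: ln_realpow prime_gt_0_nat)
qed

lemma powr_ln_prod:
  fixes n k :: nat and x :: real
  assumes k: "1 \<le> k" "k \<le> n" and x: "x > 0"
  shows "x powr ln (real k) = (\<Prod>p\<in>{p. prime p \<and> p \<le> n}. (x powr ln (real p)) ^ multiplicity p k)"
  using x by (simp add: ln_mult_sum[OF k] powr_sum powr_realpow[symmetric] powr_powr mult.commute)

lemma mult_le:
  fixes p k :: nat assumes "prime p" "k \<ge> 1" shows "multiplicity p k \<le> k"
proof -
  have "p ^ multiplicity p k dvd k" by (simp add: multiplicity_dvd)
  hence "p ^ multiplicity p k \<le> k" using assms by (simp add: dvd_imp_le)
  moreover have "multiplicity p k < 2 ^ multiplicity p k" by simp
  moreover have "2 ^ multiplicity p k \<le> p ^ multiplicity p k"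
    using assms prime_ge_2_nat power_mono by blast
  ultimately show ?thesis by linarith
qed

lemma geom_le:
  fixes y :: real assumes "0 \<le> y" "y < 1"
  shows "(\<Sum>j\<in>{..n}. y ^ j) \<le> 1 / (1 - y)"
proof -
  have "(\<Sum>j\<in>{..n}. y ^ j) \<le> suminf (\<lambda>j. y ^ j)"
    by (rule sum_le_suminf) (use assms in \<open>auto intro: summable_geometric\<close>)
  also have "\<dots> = 1 / (1 - y)" using assms by (simp add: suminf_geometric)
  finally show ?thesis .
qed

lemma y_lt1:
  fixes x :: real and p :: nat assumes "0 < x" "x < 1" "prime p"
  shows "x powr ln (real p) < 1" "0 \<le> x powr ln (real p)"
proof -
  have "ln (real p) > 0" using prime_gt_1_nat[OF assms(3)] by simp
  hence "x powr ln (real p) < 1 powr ln (real p)"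
    by (intro powr_less_mono2) (use assms in auto)
  thus "x powr ln (real p) < 1" by simp
  show "0 \<le> x powr ln (real p)" by simp
qed

lemma F_le_prod:
  fixes n :: nat and x :: real
  assumes x: "0 < x" "x < 1"
  shows "F n x \<le> (\<Prod>p\<in>{p. prime p \<and> p \<le> n}. 1 / (1 - x powr ln (real p)))"
proof -
  define P where "P = {p. prime p \<and> p \<le> n}"
  define y where "y p = x powr ln (real p)" for p :: nat
  define phi where "phi k = restrict (\<lambda>p. multiplicity p k) P" for k :: nat
  define g where "g e = (\<Prod>p\<in>P. y p ^ e p)" for e :: "nat \<Rightarrow> nat"
  have finP: "finite P" unfolding P_def by simp
  have "F n x = (\<Sum>k\<in>{1..n}. g (phi k))"
    unfolding F_def
  proof (rule sum.cong[OF refl])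
    fix k assume k: "k \<in> {1..n}"
    show "x powr ln (real k) = g (phi k)"
    proof -
      have "g (phi k) = (\<Prod>p\<in>P. y p ^ multiplicity p k)"
        unfolding g_def phi_def by (rule prod.cong) auto
      thus ?thesis using powr_ln_prod[of k n x] k x unfolding P_def y_def by simp
    qed
  qed
  also have "\<dots> = sum g (phi ` {1..n})"
  proof -
   have inj: "inj_on phi {1..n}"
   proof (rule inj_onI)
    fix a b assume a: "a \<in> {1..n}" and b: "b \<in> {1..n}" and eq: "phi a = phi b"
    show "a = b"
    proof (rule multiplicity_eq_nat)
      show "a > 0" "b > 0" using a b by auto
      fix q :: nat assume q: "prime q"
      show "multiplicity q a = multiplicity q b"
      proof (cases "q \<le> n")
        case True
        hence "q \<in> P" using q by (simp add: P_def)
        thus ?thesis using fun_cong[OF eq, of q] by (simp add: phi_def)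
      next
        case False
        have "\<not> q dvd c" if c: "c \<in> {1..n}" for c
        proof
          assume "q dvd c" hence "q \<le> c" using c by (intro dvd_imp_le) auto
          thus False using c False by simp
        qed
        hence "\<not> q dvd a" "\<not> q dvd b" using a b by auto
        thus ?thesis by (simp add: not_dvd_imp_multiplicity_0)
      qed
    qed
   qed
   show ?thesis using sum.reindex[OF inj, of g] by simp
  qed
  also have "\<dots> \<le> sum g (PiE P (\<lambda>_. {..n}))"
  proof (rule sum_mono2)
    show "finite (PiE P (\<lambda>_. {..n}))" using finP by (simp add: finite_PiE)
    show "phi ` {1..n} \<subseteq> PiE P (\<lambda>_. {..n})"
    proof
      fix e assume "e \<in> phi ` {1..n}"
      then obtain k where k: "k \<in> {1..n}" "e = phi k" by auto
      have "multiplicity p k \<le> n" if p: "p \<in> P" for p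
      proof -
        have "prime p" using p by (simp add: P_def)
        hence "multiplicity p k \<le> k" using mult_le[of p k] k by simp
        thus ?thesis using k by simp
      qed
      thus "e \<in> PiE P (\<lambda>_. {..n})" using k by (auto simp: phi_def)
    qed
    show "\<And>e. e \<in> PiE P (\<lambda>_. {..n}) - phi ` {1..n} \<Longrightarrow> 0 \<le> g e"
      unfolding g_def y_def by (intro prod_nonneg) simp
  qed
  also have "\<dots> = (\<Prod>p\<in>P. \<Sum>j\<in>{..n}. y p ^ j)"
    unfolding g_def by (rule prod_sum_PiE[symmetric]) (use finP in auto)
  also have "\<dots> \<le> (\<Prod>p\<in>P. 1 / (1 - y p))"
  proof (rule prod_mono)
    fix p assume "p \<in> P"
    hence "y p < 1" "0 \<le> y p" using y_lt1[OF x] by (auto simp: P_def y_def)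
    thus "0 \<le> (\<Sum>j\<in>{..n}. y p ^ j) \<and> (\<Sum>j\<in>{..n}. y p ^ j) \<le> 1 / (1 - y p)"
      by (auto intro: sum_nonneg geom_le)
  qed
  finally show ?thesis by (simp add: P_def y_def)
qed



lemma powr_term_integral:
  fixes a :: real and m :: nat assumes a: "a > 0"
  shows "((\<lambda>x. x powr (a * (real m + 1) - 1) / (real m + 1)) has_integral
          (1 / a * (1 / (real m + 1)^2))) {0<..<1}"
proof -
  have b: "a * (real m + 1) - 1 > -1" using a by (simp add: add_pos_nonneg)
  have "((\<lambda>x. x powr (a * (real m + 1) - 1)) has_integral
          (1 powr (a * (real m + 1) - 1 + 1) / (a * (real m + 1) - 1 + 1))) {0..1}"
    by (rule has_integral_powr_from_0) (use b in auto)
  hence "((\<lambda>x. x powr (a * (real m + 1) - 1)) has_integral (1 / (a * (real m + 1)))) {0<..<1}"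
    by (simp add: has_integral_Icc_iff_Ioo)
  hence h: "((\<lambda>x. x powr (a * (real m + 1) - 1) / (real m + 1)) has_integral
          (1 / (a * (real m + 1)) / (real m + 1))) {0<..<1}"
    by (rule has_integral_divide)
  have eq: "1 / (a * (real m + 1)) / (real m + 1) = 1 / a * (1 / (real m + 1)^2)"
    by (simp add: power2_eq_square)
  show ?thesis using h unfolding eq .
qed

lemma series_pt:
  fixes a x :: real assumes a: "a > 0" and x: "0 < x" "x < 1"
  shows "(\<lambda>m. x powr (a * (real m + 1) - 1) / (real m + 1)) sums (- ln (1 - x powr a) / x)"
proof -
  define y where "y = x powr a"
  have y: "0 \<le> y" "y < 1"
  proof -
    have "x powr a < 1 powr a" by (intro powr_less_mono2) (use a x in auto)
    thus "y < 1" by (simp add: y_def)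
  qed (simp add: y_def)
  have "(\<lambda>n. - ((-(-y))^n) / of_nat n) sums ln (1 + (-y))"
    by (rule ln_series') (use y in auto)
  hence "(\<lambda>n. - (y^n / real n)) sums ln (1 - y)" by simp
  hence "(\<lambda>n. y^n / real n) sums (- ln (1 - y))"
    using sums_minus by fastforce
  hence "(\<lambda>n. y^(Suc n) / real (Suc n)) sums (- ln (1 - y))"
    by (subst sums_Suc_iff) simp
  hence "(\<lambda>n. y^(Suc n) / real (Suc n) / x) sums (- ln (1 - y) / x)"
    by (rule sums_divide)
  moreover have "y^(Suc n) / real (Suc n) / x = x powr (a * (real n + 1) - 1) / (real n + 1)" for n
  proof -
    have "y powr (real (Suc n)) = y^(Suc n)"
      by (rule powr_realpow) (use x in \<open>simp add: y_def\<close>)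
    hence "y^(Suc n) = y powr (real (Suc n))" by simp
    also have "\<dots> = x powr (a * (real n + 1))"
      unfolding y_def by (simp add: powr_powr add.commute)
    finally have "y^(Suc n) = x powr (a * (real n + 1))" .
    moreover have "x powr (a * (real n + 1) - 1) = x powr (a * (real n + 1)) / x"
      using x by (simp add: powr_diff)
    ultimately show ?thesis by simp
  qed
  ultimately show ?thesis by (simp add: y_def)
qed

lemma G_integral:
  fixes a :: real assumes a: "a > 0"
  shows "((\<lambda>x. - ln (1 - x powr a) / x) has_integral (pi\<^sup>2 / 6 / a)) {0<..<1}"
proof -
  define S :: "real set" where "S = {0<..<1}"
  define f where "f M x = (\<Sum>m<M. x powr (a * (real m + 1) - 1) / (real m + 1))" for M :: nat and x :: real
  define c where "c M = 1 / a * (\<Sum>m<M. 1 / (real m + 1)^2)" for M :: nat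
  have fi: "(f M has_integral c M) S" for M
    unfolding f_def c_def S_def sum_distrib_left
    by (rule has_integral_sum) (use powr_term_integral[OF a] in auto)
  have lim_c: "c \<longlonglongrightarrow> pi\<^sup>2 / 6 / a"
  proof -
    have "(\<lambda>M. \<Sum>m<M. 1 / (real m + 1)^2) \<longlonglongrightarrow> pi\<^sup>2 / 6"
      using inverse_squares_sums by (simp add: sums_def add.commute)
    hence "(\<lambda>M. 1 / a * (\<Sum>m<M. 1 / (real m + 1)^2)) \<longlonglongrightarrow> 1 / a * (pi\<^sup>2 / 6)"
      by (intro tendsto_mult_left)
    thus ?thesis unfolding c_def[abs_def] by (simp add: mult.commute)
  qed
  have mc: "(\<lambda>x. - ln (1 - x powr a) / x) integrable_on S \<and>
      ((\<lambda>k. integral S (f k)) \<longlongrightarrow> integral S (\<lambda>x. - ln (1 - x powr a) / x)) sequentially"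
  proof (rule monotone_convergence_increasing)
    show "f k integrable_on S" for k using fi by blast
    show "f k x \<le> f (Suc k) x" if "x \<in> S" for k x
      unfolding f_def by simp
    show "(\<lambda>k. f k x) \<longlonglongrightarrow> - ln (1 - x powr a) / x" if "x \<in> S" for x
      using series_pt[OF a, of x] that unfolding f_def S_def sums_def by auto
    have "integral S (f k) = c k" for k using fi by blast
    hence eq: "range (\<lambda>k. integral S (f k)) = range c" by simp
    show "bounded (range (\<lambda>k. integral S (f k)))"
      unfolding eq using lim_c by (rule convergent_imp_bounded)
  qed
  have "integral S (f k) = c k" for k using fi by blast
  hence "c \<longlonglongrightarrow> integral S (\<lambda>x. - ln (1 - x powr a) / x)" using mc by simp
  hence "integral S (\<lambda>x. - ln (1 - x powr a) / x) = pi\<^sup>2 / 6 / a"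
    using lim_c LIMSEQ_unique by blast
  thus ?thesis using mc by (auto simp: S_def has_integral_integral)
qed



lemma F_ge1:
  fixes x :: real assumes "x > 0" "n \<ge> 1" shows "F n x \<ge> 1"
proof -
  have "(\<lambda>k. x powr ln (real k)) 1 \<le> (\<Sum>k = 1..n. x powr ln (real k))"
    by (rule member_le_sum) (use assms in auto)
  thus ?thesis using assms by (simp add: F_def)
qed

lemma cont_h:
  assumes "n \<ge> 1"
  shows "continuous_on {0<..<1} (\<lambda>x. ln (F n x) / x)"
proof -
  have "continuous_on {0<..<(1::real)} (\<lambda>x. \<Sum>k = 1..n. x powr ln (real k))"
    by (intro continuous_intros) auto
  hence c: "continuous_on {0<..<(1::real)} (F n)" unfolding F_def[abs_def] by simp
  have "continuous_on {0<..<(1::real)} (\<lambda>x. ln (F n x))"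
  proof (intro continuous_intros c ballI)
    fix x :: real assume "x \<in> {0<..<1}"
    thus "F n x \<noteq> 0" using F_ge1[OF _ assms, of x] by auto
  qed
  thus ?thesis by (rule continuous_on_divide[OF _ continuous_on_id]) auto
qed

theorem mainTheorem2:
  fixes n :: nat
  assumes "n \<ge> 2"
  shows "(\<lambda>x. ln (F n x) / x) integrable_on {0<..1} \<and>
         integral {0<..1} (\<lambda>x. ln (F n x) / x)
           \<le> pi\<^sup>2 / 6 * (\<Sum>p\<in>{p. prime p \<and> p \<le> n}. 1 / ln (real p))"
proof -
  define P where "P = {p. prime p \<and> p \<le> n}"
  define S :: "real set" where "S = {0<..<1}"
  define h where "h x = ln (F n x) / x" for x :: real
  define G where "G x = (\<Sum>p\<in>P. - ln (1 - x powr ln (real p)) / x)" for x :: real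
  have n1: "n \<ge> 1" using assms by simp
  have finP: "finite P" by (simp add: P_def)
  have lnp: "ln (real p) > 0" if "p \<in> P" for p
    using prime_gt_1_nat[of p] that by (simp add: P_def)
  have Gi: "(G has_integral (\<Sum>p\<in>P. pi\<^sup>2 / 6 / ln (real p))) S"
    unfolding G_def[abs_def] S_def
    by (rule has_integral_sum[OF finP]) (use G_integral lnp in auto)
  have h0: "0 \<le> h x" if "x \<in> S" for x
    using that F_ge1[OF _ n1, of x] by (auto simp: h_def S_def)
  have hG: "h x \<le> G x" if "x \<in> S" for x
  proof -
    have x: "0 < x" "x < 1" using that by (auto simp: S_def)
    have yl: "x powr ln (real p) < 1" if "p \<in> P" for p
      using y_lt1[OF x, of p] that by (simp add: P_def)
    have "ln (F n x) \<le> ln (\<Prod>p\<in>P. 1 / (1 - x powr ln (real p)))"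
      using F_le_prod[OF x, of n] F_ge1[OF x(1) n1] by (simp add: P_def)
    also have "\<dots> = (\<Sum>p\<in>P. ln (1 / (1 - x powr ln (real p))))"
    proof (rule ln_prod[OF finP])
      fix p assume "p \<in> P"
      thus "1 / (1 - x powr ln (real p)) \<noteq> 0" using yl[of p] by simp
    qed
    also have "\<dots> = (\<Sum>p\<in>P. - ln (1 - x powr ln (real p)))"
      by (rule sum.cong[OF refl]) (use yl in \<open>simp add: ln_div\<close>)
    finally have "ln (F n x) \<le> (\<Sum>p\<in>P. - ln (1 - x powr ln (real p)))" .
    hence "ln (F n x) / x \<le> (\<Sum>p\<in>P. - ln (1 - x powr ln (real p))) / x"
      using x by (simp add: divide_right_mono)
    thus ?thesis by (simp add: h_def G_def sum_divide_distrib)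
  qed
  have hint: "h integrable_on S"
  proof (rule measurable_bounded_by_integrable_imp_integrable)
    show "h \<in> borel_measurable (lebesgue_on S)"
      by (rule continuous_imp_measurable_on_sets_lebesgue)
         (use cont_h[OF n1] in \<open>auto simp: S_def h_def[abs_def]\<close>)
    show "G integrable_on S" using Gi by blast
    show "norm (h x) \<le> G x" if "x \<in> S" for x using h0[OF that] hG[OF that] by simp
    show "S \<in> sets lebesgue" by (simp add: S_def)
  qed
  have le: "integral S h \<le> (\<Sum>p\<in>P. pi\<^sup>2 / 6 / ln (real p))"
  proof -
    have Gint: "G integrable_on S" using Gi by blast
    show ?thesis using integral_le[OF hint Gint hG] integral_unique[OF Gi] by simp
  qed
  have hI: "(h has_integral integral S h) {0<..1}"
  proof -
    have "(h has_integral integral S h) S" using hint by (simp add: has_integral_integral)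
    moreover have "(h has_integral integral S h) S \<longleftrightarrow> (h has_integral integral S h) {0<..1}"
    proof (rule has_integral_spike_set_eq)
      have "{x \<in> S - {0<..1}. h x \<noteq> 0} = {}" by (auto simp: S_def)
      thus "negligible {x \<in> S - {0<..1}. h x \<noteq> 0}" by (simp only: negligible_empty)
      show "negligible {x \<in> {0<..1} - S. h x \<noteq> 0}"
        by (rule negligible_subset[OF negligible_sing[of 1]]) (auto simp: S_def)
    qed
    ultimately show ?thesis by simp
  qed
  have "(\<Sum>p\<in>P. pi\<^sup>2 / 6 / ln (real p)) = pi\<^sup>2 / 6 * (\<Sum>p\<in>P. 1 / ln (real p))"
    by (simp add: sum_distrib_left)
  thus ?thesis using hI le unfolding h_def[abs_def] P_def[symmetric]
    by (auto simp: integral_unique)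
qed


end
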